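(* Let $m\ge2$ and $f_1,\dots,f_m:X\to\mathbb R_{+\infty}$ with $\bigcap_{i=1}^m\operatorname{dom} f_i\ne\emptyset$. Assume $$\operatorname{cl}\Big(\sum_{i=1}^m\operatorname{epi} f_i^*\Big)=\operatorname{epi}\Big(\sum_{i=1}^mf_i\Big)^*,$$ where the closure is taken in $\mathcal L\times\mathbb R$. Then for all $x\in\bigcap_{i=1}^m\operatorname{dom} f_i$ and all $\varepsilon\ge0$, $$\partial_\varepsilon\Big(\sum_{i=1}^m f_i\Big)(x)=\bigcap_{\eta>0}\operatorname{cl}\Big(\bigcup_{\substack{\varepsilon_i\ge0,\ \sum_{i=1}^m\varepsilon_i=\varepsilon+\eta}}\ \sum_{i=1}^m\partial_{\varepsilon_i}f_i(x)\Big).$$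
   Context: $X$ is a nonempty set; $\mathbb R_{+\infty}=\mathbb R\cup\{+\infty\}$. $\mathcal L$ is a family of functions $X\to\mathbb R$ closed under pointwise addition and real scalar multiplication, equipped with the pointwise convergence topology (weakest topology making all evaluations $l\mapsto l(x)$ continuous); $\mathcal L\times\mathbb R$ carries the product topology; $\operatorname{cl}$ denotes closure. For $f:X\to\mathbb R_{+\infty}$: $\operatorname{dom} f=\{x:f(x)<+\infty\}$; $f^*(l)=\sup_{x\in X}(l(x)-f(x))$; $\operatorname{epi} f^*=\{(l,r)\in\mathcal L\times\mathbb R:f^*(l)\le r\}$; for $\varepsilon\ge0$, $x\in\operatorname{dom} f$, $\partial_\varepsilon f(x)=\{l\in\mathcal L: f(y)-f(x)-(l(y)-l(x))+\varepsilon\ge0\ \forall y\in X\}$. Sums of subsets (of $\mathcal L$ or of $\mathcal L\times\mathbb R$) are Minkowski sums. *)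

theory Defs
  imports "HOL-Analysis.Analysis"
begin

text \<open>X is a type 'x; functions into R_{+inf} are ereal-valued functions never equal to -inf.
The family L is a set of real functions on 'x; it carries the subspace topology of the
pointwise (product) topology on 'x \<Rightarrow> real, and L \<times> R carries the product topology.\<close>

definition lin_family :: "('x \<Rightarrow> real) set \<Rightarrow> bool" where
  "lin_family L \<longleftrightarrow> (\<forall>l\<in>L. \<forall>k\<in>L. (\<lambda>x. l x + k x) \<in> L) \<and> (\<forall>c::real. \<forall>l\<in>L. (\<lambda>x. c * l x) \<in> L)"

definition edom :: "('x \<Rightarrow> ereal) \<Rightarrow> 'x set" where
  "edom f = {x. f x < \<infinity>}"

definition conj :: "('x \<Rightarrow> ereal) \<Rightarrow> ('x \<Rightarrow> real) \<Rightarrow> ereal" where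
  "conj f l = (SUP x. ereal (l x) - f x)"

definition epi_conj :: "('x \<Rightarrow> real) set \<Rightarrow> ('x \<Rightarrow> ereal) \<Rightarrow> (('x \<Rightarrow> real) \<times> real) set" where
  "epi_conj L f = {(l, r). l \<in> L \<and> conj f l \<le> ereal r}"

definition eps_subdiff :: "('x \<Rightarrow> real) set \<Rightarrow> real \<Rightarrow> ('x \<Rightarrow> ereal) \<Rightarrow> 'x \<Rightarrow> ('x \<Rightarrow> real) set" where
  "eps_subdiff L \<epsilon> f x = {l \<in> L. \<forall>y. f y - f x - ereal (l y - l x) + ereal \<epsilon> \<ge> 0}"

definition msum_fun :: "'i set \<Rightarrow> ('i \<Rightarrow> ('x \<Rightarrow> real) set) \<Rightarrow> ('x \<Rightarrow> real) set" where
  "msum_fun I A = {(\<lambda>x. \<Sum>i\<in>I. a i x) | a. \<forall>i\<in>I. a i \<in> A i}"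

definition msum_pair :: "'i set \<Rightarrow> ('i \<Rightarrow> (('x \<Rightarrow> real) \<times> real) set) \<Rightarrow> (('x \<Rightarrow> real) \<times> real) set" where
  "msum_pair I A = {((\<lambda>x. \<Sum>i\<in>I. fst (a i) x), (\<Sum>i\<in>I. snd (a i))) | a. \<forall>i\<in>I. a i \<in> A i}"

definition clL :: "('x \<Rightarrow> real) set \<Rightarrow> ('x \<Rightarrow> real) set \<Rightarrow> ('x \<Rightarrow> real) set" where
  "clL L A = closure A \<inter> L"

definition clLR :: "('x \<Rightarrow> real) set \<Rightarrow> (('x \<Rightarrow> real) \<times> real) set \<Rightarrow> (('x \<Rightarrow> real) \<times> real) set" where
  "clLR L A = closure A \<inter> (L \<times> UNIV)"

end

theory Submission imports Defs begin

lemma sub_char: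
  assumes "g \<noteq> -\<infinity>"
  shows "(0 \<le> g - ereal c - ereal a + ereal e) \<longleftrightarrow> ereal (a - e + c) \<le> g"
  using assms by (cases g) auto

lemma conj_pt:
  assumes "g \<noteq> -\<infinity>"
  shows "(ereal a - g \<le> ereal r) \<longleftrightarrow> ereal (a - r) \<le> g"
  using assms by (cases g) auto

lemma conj_char:
  assumes "\<And>y. g y \<noteq> -\<infinity>"
  shows "conj g l \<le> ereal r \<longleftrightarrow> (\<forall>y. ereal (l y - r) \<le> g y)"
  unfolding conj_def SUP_le_iff using conj_pt[OF assms] by simp

lemma subdiff_char:
  assumes "\<And>y. g y \<noteq> -\<infinity>" and "g x = ereal c"
  shows "eps_subdiff L e g x = {l\<in>L. \<forall>y. ereal (l y - l x - e + c) \<le> g y}"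
  unfolding eps_subdiff_def using sub_char[OF assms(1)] assms(2) by simp

lemma sum_not_minf:
  fixes g :: "'i \<Rightarrow> ereal"
  assumes "\<And>i. i \<in> I \<Longrightarrow> g i \<noteq> -\<infinity>"
  shows "(\<Sum>i\<in>I. g i) \<noteq> -\<infinity>"
  using assms
proof (induction I rule: infinite_finite_induct)
  case (insert a A)
  then show ?case by simp
qed auto

lemma sum_le_ereal:
  fixes g :: "'i \<Rightarrow> 'x \<Rightarrow> ereal"
  assumes "finite I" "\<And>i. i \<in> I \<Longrightarrow> ereal (a i) \<le> g i y"
  shows "ereal (\<Sum>i\<in>I. a i) \<le> (\<Sum>i\<in>I. g i y)"
proof -
  have "(\<Sum>i\<in>I. ereal (a i)) \<le> (\<Sum>i\<in>I. g i y)" by (rule sum_mono) (use assms in auto)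
  then show ?thesis by simp
qed

theorem mainTheorem10:
  fixes L :: "('x \<Rightarrow> real) set" and m :: nat and f :: "nat \<Rightarrow> 'x \<Rightarrow> ereal"
  assumes "lin_family L"
    and "m \<ge> 2"
    and "\<And>i y. i \<in> {1..m} \<Longrightarrow> f i y \<noteq> -\<infinity>"
    and "(\<Inter>i\<in>{1..m}. edom (f i)) \<noteq> {}"
    and "clLR L (msum_pair {1..m} (\<lambda>i. epi_conj L (f i)))
           = epi_conj L (\<lambda>y. \<Sum>i\<in>{1..m}. f i y)"
  shows "\<forall>x\<in>(\<Inter>i\<in>{1..m}. edom (f i)). \<forall>\<epsilon>\<ge>0.
           eps_subdiff L \<epsilon> (\<lambda>y. \<Sum>i\<in>{1..m}. f i y) x
           = (\<Inter>\<eta>\<in>{0<..}. clL L (\<Union>{msum_fun {1..m} (\<lambda>i. eps_subdiff L (e i) (f i) x) | e.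
                 (\<forall>i\<in>{1..m}. e i \<ge> 0) \<and> (\<Sum>i\<in>{1..m}. e i) = \<epsilon> + \<eta>}))"
proof (intro ballI allI impI)
  fix x and \<epsilon> :: real
  assume xd: "x \<in> (\<Inter>i\<in>{1..m}. edom (f i))" and e0: "\<epsilon> \<ge> 0"
  define I where "I = {1..m}"
  have finI: "finite I" and oneI: "1 \<in> I" using assms(2) by (auto simp: I_def)
  define c where "c i = real_of_ereal (f i x)" for i
  have fx: "f i x = ereal (c i)" if "i \<in> I" for i
  proof -
    have "f i x < \<infinity>" using xd that by (auto simp: I_def edom_def)
    moreover have "f i x \<noteq> -\<infinity>" using assms(3) that by (auto simp: I_def)
    ultimately show ?thesis unfolding c_def by (cases "f i x") auto
  qed
  define F where "F y = (\<Sum>i\<in>I. f i y)" for y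
  define C where "C = (\<Sum>i\<in>I. c i)"
  have Fnm: "F y \<noteq> -\<infinity>" for y
    unfolding F_def by (rule sum_not_minf) (use assms(3) in \<open>auto simp: I_def\<close>)
  have Fx: "F x = ereal C"
  proof -
    have "F x = (\<Sum>i\<in>I. ereal (c i))" unfolding F_def by (rule sum.cong) (auto simp: fx)
    then show ?thesis by (simp add: C_def)
  qed
  have hsub: "eps_subdiff L e (f i) x = {l\<in>L. \<forall>y. ereal (l y - l x - e + c i) \<le> f i y}"
    if "i \<in> I" for i e
    by (rule subdiff_char) (use assms(3) that fx in \<open>auto simp: I_def\<close>)
  have hF: "eps_subdiff L \<epsilon> F x = {l\<in>L. \<forall>y. ereal (l y - l x - \<epsilon> + C) \<le> F y}"
    by (rule subdiff_char) (use Fnm Fx in auto)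
  define U where "U \<eta> = \<Union>{msum_fun I (\<lambda>i. eps_subdiff L (e i) (f i) x) | e.
                 (\<forall>i\<in>I. e i \<ge> 0) \<and> (\<Sum>i\<in>I. e i) = \<epsilon> + \<eta>}" for \<eta>
  have "eps_subdiff L \<epsilon> F x = (\<Inter>\<eta>\<in>{0<..}. clL L (U \<eta>))"
  proof (rule set_eqI, rule iffI)
    fix l assume "l \<in> eps_subdiff L \<epsilon> F x"
    then have lL: "l \<in> L" and lF: "\<forall>y. ereal (l y - l x - \<epsilon> + C) \<le> F y" using hF by auto
    show "l \<in> (\<Inter>\<eta>\<in>{0<..}. clL L (U \<eta>))"
    proof
      fix \<eta> :: real assume "\<eta> \<in> {0<..}"
      then have eta: "\<eta> > 0" by simp
      define r where "r = \<epsilon> + l x - C"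
      have "conj F l \<le> ereal r"
        unfolding conj_char[OF Fnm] using lF by (simp add: r_def algebra_simps)
      then have "(l, r) \<in> epi_conj L F" using lL by (simp add: epi_conj_def)
      then have "(l, r) \<in> closure (msum_pair I (\<lambda>i. epi_conj L (f i)))"
      proof -
        have Feq: "F = (\<lambda>y. \<Sum>i\<in>I. f i y)" by (simp add: fun_eq_iff F_def)
        have "epi_conj L F = clLR L (msum_pair I (\<lambda>i. epi_conj L (f i)))"
          using assms(5) by (simp add: I_def Feq)
        then show ?thesis using \<open>(l, r) \<in> epi_conj L F\<close> by (simp add: clLR_def)
      qed
      then have clo: "\<And>S. open S \<Longrightarrow> (l, r) \<in> S \<Longrightarrow> msum_pair I (\<lambda>i. epi_conj L (f i)) \<inter> S \<noteq> {}"
        unfolding closure_iff_nhds_not_empty by blast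
      have "l \<in> closure (U \<eta>)"
        unfolding closure_iff_nhds_not_empty
      proof (intro allI impI)
        fix A W assume WA: "W \<subseteq> A" and oW: "open W" and lW: "l \<in> W"
        define W' where "W' = W \<inter> {k. \<bar>k x - l x\<bar> < \<eta>/4}"
        have oW': "open W'" unfolding W'_def
          by (intro open_Int oW open_Collect_less continuous_on_rabs continuous_on_diff
              continuous_on_const continuous_on_product_coordinates)
        have "open (W' \<times> {t. \<bar>t - r\<bar> < \<eta>/4})"
          by (intro open_Times oW' open_Collect_less continuous_on_rabs continuous_on_diff
              continuous_on_const continuous_on_id)
        moreover have "(l, r) \<in> W' \<times> {t. \<bar>t - r\<bar> < \<eta>/4}" using lW eta by (simp add: W'_def)
        ultimately obtain p where pS: "p \<in> msum_pair I (\<lambda>i. epi_conj L (f i))"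
          and pW: "p \<in> W' \<times> {t. \<bar>t - r\<bar> < \<eta>/4}" using clo by blast
        then obtain a where a: "\<forall>i\<in>I. a i \<in> epi_conj L (f i)"
          and p: "p = ((\<lambda>z. \<Sum>i\<in>I. fst (a i) z), (\<Sum>i\<in>I. snd (a i)))"
          unfolding msum_pair_def by blast
        define k where "k = (\<lambda>z. \<Sum>i\<in>I. fst (a i) z)"
        have kW: "k \<in> W'" and rr: "\<bar>(\<Sum>i\<in>I. snd (a i)) - r\<bar> < \<eta>/4"
          using pW p by (auto simp: k_def)
        have kx: "\<bar>k x - l x\<bar> < \<eta>/4" using kW by (simp add: W'_def)
        have ai: "fst (a i) \<in> L \<and> (\<forall>y. ereal (fst (a i) y - snd (a i)) \<le> f i y)" if "i \<in> I" for i
        proof -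
          have "fst (a i) \<in> L \<and> conj (f i) (fst (a i)) \<le> ereal (snd (a i))"
            using a that by (cases "a i") (auto simp: epi_conj_def)
          moreover have "\<And>y. f i y \<noteq> -\<infinity>" using assms(3) that by (auto simp: I_def)
          ultimately show ?thesis using conj_char[of "f i" "fst (a i)" "snd (a i)"] by simp
        qed
        define d where "d i = snd (a i) + c i - fst (a i) x" for i
        have d0: "d i \<ge> 0" if "i \<in> I" for i
        proof -
          have "ereal (fst (a i) x - snd (a i)) \<le> ereal (c i)" using ai[OF that] fx[OF that] by metis
          then show ?thesis unfolding d_def by simp
        qed
        define s where "s = \<epsilon> + \<eta> - (\<Sum>i\<in>I. d i)"
        have sumd: "(\<Sum>i\<in>I. d i) = (\<Sum>i\<in>I. snd (a i)) + C - k x"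
          unfolding d_def C_def k_def by (simp add: sum.distrib sum_subtractf)
        have s0: "s \<ge> 0" using sumd rr kx eta unfolding s_def r_def by linarith
        define e where "e i = d i + (if i = 1 then s else 0)" for i
        have e0': "\<forall>i\<in>I. e i \<ge> 0" using d0 s0 by (simp add: e_def)
        have esum: "(\<Sum>i\<in>I. e i) = \<epsilon> + \<eta>"
        proof -
          have "(\<Sum>i\<in>I. e i) = (\<Sum>i\<in>I. d i) + (\<Sum>i\<in>I. (if i = 1 then s else 0))"
            unfolding e_def by (simp add: sum.distrib)
          also have "(\<Sum>i\<in>I. (if i = 1 then s else 0)) = s" using finI oneI by simp
          finally show ?thesis by (simp add: s_def)
        qed
        have sd: "fst (a i) \<in> eps_subdiff L (e i) (f i) x" if "i \<in> I" for i
        proof -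
          have "ereal (fst (a i) y - fst (a i) x - e i + c i) \<le> f i y" for y
          proof -
            have "fst (a i) y - fst (a i) x - e i + c i \<le> fst (a i) y - snd (a i)"
              using s0 unfolding e_def d_def by auto
            then show ?thesis using ai[OF that] order_trans ereal_less_eq(3) by blast
          qed
          then show ?thesis using hsub[OF that] ai[OF that] by auto
        qed
        have "k \<in> msum_fun I (\<lambda>i. eps_subdiff L (e i) (f i) x)"
        proof -
          have "\<exists>b. k = (\<lambda>z. \<Sum>i\<in>I. b i z) \<and> (\<forall>i\<in>I. b i \<in> eps_subdiff L (e i) (f i) x)"
            using sd by (intro exI[where x="\<lambda>i. fst (a i)"]) (auto simp: k_def)
          then show ?thesis unfolding msum_fun_def by blast
        qed
        then have "k \<in> U \<eta>" unfolding U_def using e0' esum by blast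
        then show "U \<eta> \<inter> A \<noteq> {}" using kW WA by (auto simp: W'_def)
      qed
      then show "l \<in> clL L (U \<eta>)" using lL by (simp add: clL_def)
    qed
  next
    fix l assume lin: "l \<in> (\<Inter>\<eta>\<in>{0<..}. clL L (U \<eta>))"
    then have lL: "l \<in> L" by (auto simp: clL_def)
    have lC: "ereal (l y - l x - (\<epsilon> + \<eta>) + C) \<le> F y" if eta: "\<eta> > 0" for \<eta> y
    proof -
      define Cs where "Cs = {k. \<forall>y. ereal (k y - k x - (\<epsilon> + \<eta>) + C) \<le> F y}"
      have "closed Cs"
      proof -
        have "closed {k. ereal (k y - k x - (\<epsilon> + \<eta>) + C) \<le> F y}" for y
        proof (cases "F y")
          case (real d)
          have "closed {k. (\<lambda>k. k y - k x - (\<epsilon> + \<eta>) + C) k \<le> (\<lambda>k. d) k}"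
            by (intro closed_Collect_le continuous_on_add continuous_on_diff
                continuous_on_const continuous_on_product_coordinates)
          then show ?thesis using real by simp
        next
          case PInf then show ?thesis by simp
        next
          case MInf then show ?thesis using Fnm by simp
        qed
        then have "closed (\<Inter>y. {k. ereal (k y - k x - (\<epsilon> + \<eta>) + C) \<le> F y})" by blast
        moreover have "Cs = (\<Inter>y. {k. ereal (k y - k x - (\<epsilon> + \<eta>) + C) \<le> F y})"
          unfolding Cs_def by auto
        ultimately show ?thesis by simp
      qed
      moreover have "U \<eta> \<subseteq> Cs"
      proof
        fix k assume "k \<in> U \<eta>"
        then obtain e where e: "(\<forall>i\<in>I. e i \<ge> 0)" "(\<Sum>i\<in>I. e i) = \<epsilon> + \<eta>"
          and k: "k \<in> msum_fun I (\<lambda>i. eps_subdiff L (e i) (f i) x)"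
          unfolding U_def by blast
        then obtain a where a: "\<forall>i\<in>I. a i \<in> eps_subdiff L (e i) (f i) x"
          and kd: "k = (\<lambda>z. \<Sum>i\<in>I. a i z)" unfolding msum_fun_def by blast
        show "k \<in> Cs" unfolding Cs_def
        proof (intro CollectI allI)
          fix y
          have "ereal (\<Sum>i\<in>I. a i y - a i x - e i + c i) \<le> F y"
            unfolding F_def by (rule sum_le_ereal[OF finI]) (use a hsub in auto)
          moreover have "(\<Sum>i\<in>I. a i y - a i x - e i + c i) = k y - k x - (\<epsilon> + \<eta>) + C"
            unfolding kd C_def using e(2) by (simp add: sum.distrib sum_subtractf)
          ultimately show "ereal (k y - k x - (\<epsilon> + \<eta>) + C) \<le> F y" by simp
        qed
      qed
      ultimately have "closure (U \<eta>) \<subseteq> Cs" by (rule closure_minimal[rotated])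
      moreover have "l \<in> closure (U \<eta>)" using lin eta by (auto simp: clL_def)
      ultimately show ?thesis unfolding Cs_def by blast
    qed
    have "ereal (l y - l x - \<epsilon> + C) \<le> F y" for y
    proof (cases "F y")
      case (real d)
      have "l y - l x - \<epsilon> + C \<le> d + \<eta>" if "\<eta> > 0" for \<eta>
        using lC[OF that, of y] real by simp
      then have "l y - l x - \<epsilon> + C \<le> d" by (rule field_le_epsilon)
      then show ?thesis using real by simp
    qed (use Fnm in auto)
    then show "l \<in> eps_subdiff L \<epsilon> F x" using hF lL by auto
  qed
  then show "eps_subdiff L \<epsilon> (\<lambda>y. \<Sum>i\<in>{1..m}. f i y) x
           = (\<Inter>\<eta>\<in>{0<..}. clL L (\<Union>{msum_fun {1..m} (\<lambda>i. eps_subdiff L (e i) (f i) x) | e.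
                 (\<forall>i\<in>{1..m}. e i \<ge> 0) \<and> (\<Sum>i\<in>{1..m}. e i) = \<epsilon> + \<eta>}))"
    unfolding F_def U_def I_def by simp
qed

end
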